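(* Let $\mu^*\approx 0.01191$ be the unique root in $(0,1)$ of $81\mu=(1-\mu)^3$. For the Best-Fit algorithm in the random-order model restricted to inputs in which every item has size in $(1/4,1/2]$, $$\limsup_{m\to\infty}\ \sup_{I:\ \mathrm{Opt}(I)=m,\ \text{all sizes in }(1/4,1/2]}\ \frac{\mathbb E_\sigma[\mathrm{BF}(I_\sigma)]}{\mathrm{Opt}(I)}\le \frac32-\frac{\mu^*}{2}\approx 1.4941.$$
   Context: Bin packing: items with sizes in $(0,1]$ are to be partitioned into the minimum number $\mathrm{Opt}(I)$ of bins of total size at most $1$. Best-Fit (BF) packs each arriving item into the fullest bin in which it fits, opening a new bin if necessary; $\mathrm{BF}(L)$ is the number of bins it uses on list $L$. In the random-order model, the list $I=(x_1,\dots,x_n)$ is fixed by an adversary, $\sigma$ is a uniformly random permutation of $[n]$, and items arrive in the order $I_\sigma=(x_{\sigma(1)},\dots,x_{\sigma(n)})$. *)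

theory Defs
  imports "HOL-Analysis.Analysis" "HOL-Combinatorics.Permutations"
begin

text \<open>A bin configuration is the list of loads of the currently open bins.
  Best-Fit puts item x into a fullest bin that can still accommodate it
  (ties broken by lowest index; the tie-breaking does not affect the number
  of bins), and opens a new bin if no bin fits.\<close>

definition bf_step :: "real list \<Rightarrow> real \<Rightarrow> real list" where
  "bf_step loads x =
     (let F = filter (\<lambda>j. loads ! j + x \<le> 1) [0..<length loads] in
      if F = [] then loads @ [x]
      else let m = Max ((\<lambda>j. loads ! j) ` set F);
               j = hd (filter (\<lambda>j. loads ! j = m) F)
           in loads[j := loads ! j + x])"

definition BF :: "real list \<Rightarrow> nat" where
  "BF L = length (foldl bf_step [] L)"

definition Opt :: "real list \<Rightarrow> nat" where
  "Opt I = (LEAST k. \<exists>f :: nat \<Rightarrow> nat.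
              (\<forall>i < length I. f i < k) \<and>
              (\<forall>j < k. (\<Sum>i \<in> {i. i < length I \<and> f i = j}. I ! i) \<le> 1))"

definition permute_list_by :: "(nat \<Rightarrow> nat) \<Rightarrow> real list \<Rightarrow> real list" where
  "permute_list_by \<sigma> I = map (\<lambda>i. I ! \<sigma> i) [0..<length I]"

definition E_BF_random :: "real list \<Rightarrow> real" where
  "E_BF_random I =
     (\<Sum>\<sigma> \<in> {\<sigma>. \<sigma> permutes {..<length I}}. real (BF (permute_list_by \<sigma> I)))
     / real (card {\<sigma>. \<sigma> permutes {..<length I}})"

end

theory Submission
  imports Defs "HOL-Combinatorics.Multiset_Permutations"
begin


definition Wc :: "nat \<Rightarrow> bool list \<Rightarrow> nat" where
  "Wc k bs = card {i. i + k \<le> length bs \<and> (\<forall>t<k. bs!(i+t))}"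

definition pfx :: "nat \<Rightarrow> bool list \<Rightarrow> bool" where
  "pfx k bs = (k \<le> length bs \<and> (\<forall>t<k. bs!t))"

definition ff :: "nat \<Rightarrow> nat \<Rightarrow> real" where
  "ff k s = (\<Prod>j<k. real s - real j)"

lemma ff_0[simp]: "ff 0 s = 1" by (simp add: ff_def)

lemma ff_Suc1: "ff (Suc k) s = ff k s * (real s - real k)"
  by (simp add: ff_def)

lemma ff_Suc2: "ff (Suc k) s = real s * ff k (s - 1)"
proof (cases s)
  case 0 then show ?thesis by (simp add: ff_def prod.lessThan_Suc_shift) auto
next
  case (Suc s')
  have "ff (Suc k) s = (real s - 0) * (\<Prod>j<k. real s - real (Suc j))"
    unfolding ff_def by (subst prod.lessThan_Suc_shift) simp
  also have "(\<Prod>j<k. real s - real (Suc j)) = ff k (s - 1)"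
    unfolding ff_def using Suc by (intro prod.cong) auto
  finally show ?thesis by simp
qed

lemma ff_zero: "s < k \<Longrightarrow> ff k s = 0"
  unfolding ff_def by (rule prod_zero) (auto intro!: bexI[of _ s])

lemma pfx_0[simp]: "pfx 0 bs" by (simp add: pfx_def)
lemma pfx_Nil[simp]: "pfx (Suc k) [] = False" by (simp add: pfx_def)
lemma pfx_Cons[simp]: "pfx (Suc k) (b#bs) = (b \<and> pfx k bs)"
  by (auto simp: pfx_def All_less_Suc2)

lemma Wc_Cons: "Wc k (b#bs) = Wc k bs + (if pfx k (b#bs) then 1 else 0)"
proof -
  let ?S = "{i. i + k \<le> length bs \<and> (\<forall>t<k. bs!(i+t))}"
  have eq: "{i. i + k \<le> length (b#bs) \<and> (\<forall>t<k. (b#bs)!(i+t))}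
      = (if pfx k (b#bs) then {0} else {}) \<union> Suc ` ?S"
  proof (intro set_eqI iffI)
    fix i assume "i \<in> {i. i + k \<le> length (b#bs) \<and> (\<forall>t<k. (b#bs)!(i+t))}"
    then show "i \<in> (if pfx k (b#bs) then {0} else {}) \<union> Suc ` ?S"
      by (cases i) (auto simp: pfx_def)
  next
    fix i assume "i \<in> (if pfx k (b#bs) then {0} else {}) \<union> Suc ` ?S"
    then show "i \<in> {i. i + k \<le> length (b#bs) \<and> (\<forall>t<k. (b#bs)!(i+t))}"
      by (auto simp: pfx_def split: if_splits)
  qed
  have fin: "finite ?S" by (rule finite_subset[of _ "{..length bs}"]) auto
  show ?thesis unfolding Wc_def eq
    by (subst card_Un_disjoint) (auto simp: fin card_image)
qed

lemma Wc_Nil: "Wc k [] = (if k = 0 then 1 else 0)"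
proof -
  have "{i. i + k \<le> length ([]::bool list) \<and> (\<forall>t<k. ([]::bool list)!(i+t))} = (if k = 0 then {0} else {})"
    by auto
  then show ?thesis by (simp add: Wc_def)
qed

lemma sum_perms:
  assumes "finite A" "A \<noteq> {}"
  shows "(\<Sum>xs\<in>permutations_of_set A. F xs) = (\<Sum>a\<in>A. \<Sum>ys\<in>permutations_of_set (A-{a}). F (a#ys))"
proof -
  have "(\<Sum>xs\<in>permutations_of_set A. F xs) = (\<Sum>xs\<in>(\<Union>x\<in>A. (\<lambda>xs. x # xs) ` permutations_of_set (A - {x})). F xs)"
    using permutations_of_set_nonempty[OF assms(2)] by simp
  also have "\<dots> = (\<Sum>a\<in>A. \<Sum>xs\<in>(\<lambda>xs. a # xs) ` permutations_of_set (A - {a}). F xs)"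
    by (rule sum.UNION_disjoint) (auto simp: assms)
  also have "\<dots> = (\<Sum>a\<in>A. \<Sum>ys\<in>permutations_of_set (A-{a}). F (a#ys))"
    by (rule sum.cong[OF refl], subst sum.reindex) (auto simp: inj_on_def)
  finally show ?thesis .
qed

lemma card_filter_remove:
  assumes "finite X" "a \<in> X"
  shows "card {x\<in>X-{a}. g x} = card {x\<in>X. g x} - (if g a then 1 else 0)"
proof -
  have "{x\<in>X-{a}. g x} = {x\<in>X. g x} - {a}" by auto
  then show ?thesis using assms by (auto simp: card_Diff_singleton_if)
qed

lemma sum_split_g:
  assumes "finite X"
  shows "(\<Sum>a\<in>X. (f (g a) :: real)) = real (card {x\<in>X. g x}) * f True + real (card X - card {x\<in>X. g x}) * f False"
proof -
  have "(\<Sum>a\<in>X. f (g a)) = (\<Sum>a\<in>{x\<in>X. g x}. f (g a)) + (\<Sum>a\<in>{x\<in>X. \<not> g x}. f (g a))"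
    using assms by (subst sum.union_disjoint[symmetric]) (auto intro: sum.cong)
  also have "\<dots> = real (card {x\<in>X. g x}) * f True + real (card {x\<in>X. \<not> g x}) * f False"
    by simp
  also have "card {x\<in>X. \<not> g x} = card X - card {x\<in>X. g x}"
  proof -
    have "X = {x\<in>X. g x} \<union> {x\<in>X. \<not> g x}" by auto
    then have "card X = card {x\<in>X. g x} + card {x\<in>X. \<not> g x}"
      using assms by (metis (no_types, lifting) card_Un_disjoint disjoint_iff finite_Un mem_Collect_eq)
    then show ?thesis by simp
  qed
  finally show ?thesis .
qed

lemma sum_pfx:
  assumes "finite X"
  shows "(\<Sum>xs\<in>permutations_of_set X. if pfx k (map g xs) then 1 else 0 :: real)
           = ff k (card {x\<in>X. g x}) * fact (card X - k)"
  using assms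
proof (induction k arbitrary: X)
  case 0
  then show ?case by simp
next
  case (Suc k)
  show ?case
  proof (cases "X = {}")
    case True
    then show ?thesis by (auto simp: ff_def)
  next
    case False
    let ?s = "card {x\<in>X. g x}"
    have "(\<Sum>xs\<in>permutations_of_set X. if pfx (Suc k) (map g xs) then 1 else 0 :: real)
        = (\<Sum>a\<in>X. \<Sum>ys\<in>permutations_of_set (X-{a}). if g a \<and> pfx k (map g ys) then 1 else 0)"
      by (subst sum_perms[OF Suc.prems False]) simp
    also have "\<dots> = (\<Sum>a\<in>X. if g a then ff k (card {x\<in>X-{a}. g x}) * fact (card (X-{a}) - k) else 0)"
      by (rule sum.cong[OF refl]) (auto simp: Suc.IH Suc.prems)
    also have "\<dots> = (\<Sum>a\<in>X. if g a then ff k (?s - 1) * fact (card X - Suc k) else 0)"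
      apply (rule sum.cong[OF refl])
      subgoal for a using card_filter_remove[OF Suc.prems(1), of a g] Suc.prems by simp
      done
    also have "\<dots> = real ?s * ff k (?s - 1) * fact (card X - Suc k)"
      using sum_split_g[OF Suc.prems, of "\<lambda>b. if b then ff k (?s - 1) * fact (card X - Suc k) else 0" g]
      by simp
    also have "\<dots> = ff (Suc k) ?s * fact (card X - Suc k)" by (simp add: ff_Suc2)
    finally show ?thesis .
  qed
qed

lemma sum_Wc:
  assumes "finite X" "card X = n"
  shows "(\<Sum>xs\<in>permutations_of_set X. real (Wc k (map g xs)))
           = real (n + 1 - k) * ff k (card {x\<in>X. g x}) * fact (n - k)"
  using assms
proof (induction n arbitrary: X)
  case 0
  then have "X = {}" by auto
  then show ?case by (cases k) (simp_all add: Wc_Nil)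
next
  case (Suc n)
  then have ne: "X \<noteq> {}" by auto
  let ?s = "card {x\<in>X. g x}"
  have sle: "?s \<le> Suc n" using Suc.prems by (metis (no_types, lifting) card_mono mem_Collect_eq subsetI)
  have "(\<Sum>xs\<in>permutations_of_set X. real (Wc k (map g xs)))
      = (\<Sum>a\<in>X. \<Sum>ys\<in>permutations_of_set (X-{a}). real (Wc k (map g ys)) + (if pfx k (map g (a#ys)) then 1 else 0))"
    by (subst sum_perms[OF Suc.prems(1) ne]) (auto intro!: sum.cong simp: Wc_Cons)
  also have "\<dots> = (\<Sum>a\<in>X. \<Sum>ys\<in>permutations_of_set (X-{a}). real (Wc k (map g ys)))
                + (\<Sum>a\<in>X. \<Sum>ys\<in>permutations_of_set (X-{a}). (if pfx k (map g (a#ys)) then 1 else 0))"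
    by (simp add: sum.distrib)
  also have "(\<Sum>a\<in>X. \<Sum>ys\<in>permutations_of_set (X-{a}). (if pfx k (map g (a#ys)) then 1 else 0))
           = (\<Sum>xs\<in>permutations_of_set X. if pfx k (map g xs) then 1 else 0 :: real)"
    by (subst sum_perms[OF Suc.prems(1) ne]) simp
  also have "\<dots> = ff k ?s * fact (Suc n - k)" using sum_pfx[OF Suc.prems(1)] Suc.prems by simp
  also have "(\<Sum>a\<in>X. \<Sum>ys\<in>permutations_of_set (X-{a}). real (Wc k (map g ys)))
      = (\<Sum>a\<in>X. real (n + 1 - k) * ff k (card {x\<in>X-{a}. g x}) * fact (n - k))"
    by (rule sum.cong[OF refl]) (use Suc in auto)
  also have "\<dots> = (\<Sum>a\<in>X. real (n + 1 - k) * fact (n - k) * ff k (?s - (if g a then 1 else 0)))"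
    apply (rule sum.cong[OF refl])
    subgoal for a using card_filter_remove[OF Suc.prems(1), of a g] Suc.prems by simp
    done
  also have "\<dots> = real (n + 1 - k) * fact (n - k) * (real ?s * ff k (?s - 1) + real (Suc n - ?s) * ff k ?s)"
    using sum_split_g[OF Suc.prems(1), of "\<lambda>b. real (n + 1 - k) * fact (n - k) * ff k (?s - (if b then 1 else 0))" g]
      Suc.prems by (simp add: algebra_simps)
  also have "real ?s * ff k (?s - 1) + real (Suc n - ?s) * ff k ?s = ff k ?s * (real (Suc n) - real k)"
  proof -
    have h: "real ?s * ff k (?s - 1) = ff k ?s * (real ?s - real k)"
      using ff_Suc1[of k ?s] ff_Suc2[of k ?s] by simp
    show ?thesis using sle unfolding h by (simp add: of_nat_diff algebra_simps)
  qed
  finally have main: "(\<Sum>xs\<in>permutations_of_set X. real (Wc k (map g xs))) =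
     real (n + 1 - k) * fact (n - k) * (ff k ?s * (real (Suc n) - real k)) + ff k ?s * fact (Suc n - k)" .
  show ?case
  proof (cases "k \<le> n")
    case True
    have e: "(fact (Suc n - k)::real) = (real n - real k + 1) * fact (n - k)"
      using True by (simp add: Suc_diff_le of_nat_diff)
    have e2: "real (n + 1 - k) = real n - real k + 1" using True by (simp add: of_nat_diff)
    have e3: "real (Suc n + 1 - k) = real n - real k + 2" using True by (simp add: of_nat_diff)
    show ?thesis unfolding main e e2 e3 by (simp add: algebra_simps)
  next
    case False
    show ?thesis
    proof (cases "k = Suc n")
      case True then show ?thesis unfolding main by simp
    next
      case False2: False
      with False have "?s < k" using sle by linarith
      then show ?thesis unfolding main by (simp add: ff_zero)
    qed
  qed
qed




definition fit :: "real list \<Rightarrow> real \<Rightarrow> bool" where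
  "fit st x = (\<exists>j<length st. st!j + x \<le> 1)"
definition aev :: "real list \<Rightarrow> real \<Rightarrow> bool" where
  "aev st x = (\<exists>j<length st. 1/2 < st!j \<and> st!j + x \<le> 1)"
definition hasLow :: "real list \<Rightarrow> bool" where
  "hasLow st = (\<exists>j<length st. st!j \<le> 1/2)"
definition good :: "real list \<Rightarrow> bool" where
  "good st = (\<exists>j<length st. 1/2 < st!j \<and> st!j \<le> 2/3)"
definition lowSmall :: "real list \<Rightarrow> bool" where
  "lowSmall st = (\<forall>j<length st. st!j \<le> 1/2 \<longrightarrow> st!j \<le> 1/3)"
definition bfinv :: "real list \<Rightarrow> bool" where
  "bfinv st = ((\<forall>j<length st. 1/4 < st!j \<and> st!j \<le> 1) \<and>
             (\<forall>i<length st. \<forall>j<length st. st!i \<le> 1/2 \<longrightarrow> st!j \<le> 1/2 \<longrightarrow> i = j))"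
definition item :: "real \<Rightarrow> bool" where
  "item x = (1/4 < x \<and> x \<le> 1/2)"

lemma bf_nofit: "\<not> fit st x \<Longrightarrow> bf_step st x = st @ [x]"
proof -
  assume "\<not> fit st x"
  then have "filter (\<lambda>j. st ! j + x \<le> 1) [0..<length st] = []"
    by (auto simp: fit_def filter_empty_conv)
  then show ?thesis by (simp add: bf_step_def)
qed

lemma bf_fit:
  assumes "fit st x"
  shows "\<exists>j<length st. bf_step st x = st[j := st!j + x] \<and> st!j + x \<le> 1 \<and>
           (\<forall>i<length st. st!i + x \<le> 1 \<longrightarrow> st!i \<le> st!j)"
proof -
  define F where "F = filter (\<lambda>j. st ! j + x \<le> 1) [0..<length st]"
  have setF: "set F = {j. j < length st \<and> st!j + x \<le> 1}" by (auto simp: F_def)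
  have Fne: "F \<noteq> []" using assms by (auto simp: fit_def F_def filter_empty_conv)
  define m where "m = Max ((\<lambda>j. st ! j) ` set F)"
  have fin: "finite ((\<lambda>j. st ! j) ` set F)" by simp
  have ne: "(\<lambda>j. st ! j) ` set F \<noteq> {}" using Fne by simp
  have "m \<in> (\<lambda>j. st ! j) ` set F" unfolding m_def using Max_in[OF fin ne] .
  then obtain j0 where j0: "j0 \<in> set F" "st!j0 = m" by auto
  define j where "j = hd (filter (\<lambda>j. st ! j = m) F)"
  have ne2: "filter (\<lambda>j. st ! j = m) F \<noteq> []" using j0 by (auto simp: filter_empty_conv)
  have "j \<in> set (filter (\<lambda>j. st ! j = m) F)" unfolding j_def using ne2 by (rule hd_in_set)
  then have jF: "j \<in> set F" and jm: "st!j = m" by auto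
  have eq: "bf_step st x = st[j := st!j + x]"
    using Fne by (simp add: bf_step_def F_def[symmetric] m_def[symmetric] j_def[symmetric] Let_def)
  have "\<forall>i<length st. st!i + x \<le> 1 \<longrightarrow> st!i \<le> st!j"
    using jm m_def fin setF by (auto intro: Max_ge)
  then show ?thesis using jF setF eq by auto
qed

lemma low_fits: "bfinv st \<Longrightarrow> item x \<Longrightarrow> hasLow st \<Longrightarrow> fit st x"
  by (auto simp: hasLow_def fit_def item_def)

lemma step_main:
  assumes bfinv: "bfinv st" and it: "item x"
  shows "bfinv (bf_step st x) \<and>
         2 * length (bf_step st x) + (if aev st x then 1 else 0) + (if hasLow st then 1 else 0)
           \<le> 2 * length st + 1 + (if hasLow (bf_step st x) then 1 else 0)
         \<and> (\<not> aev st x \<longrightarrow> hasLow st \<longrightarrow> \<not> hasLow (bf_step st x) \<and>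
               (lowSmall st \<longrightarrow> x \<le> 1/3 \<longrightarrow> good (bf_step st x)))
         \<and> (\<not> aev st x \<longrightarrow> \<not> hasLow st \<longrightarrow> x \<le> 1/3 \<longrightarrow> hasLow (bf_step st x) \<and> lowSmall (bf_step st x))"
proof (cases "fit st x")
  case False
  then have nl: "\<not> hasLow st" using low_fits bfinv it by blast
  have na: "\<not> aev st x" using False by (auto simp: fit_def aev_def)
  have eq: "bf_step st x = st @ [x]" using bf_nofit False by simp
  have hi: "\<forall>j<length st. 1/2 < st!j" using nl by (auto simp: hasLow_def)
  have bfinv': "bfinv (st @ [x])"
    using bfinv it hi unfolding bfinv_def item_def
    by (auto simp: nth_append split: if_splits)
  have hl: "hasLow (st @ [x])" using it by (auto simp: hasLow_def item_def nth_append intro!: exI[of _ "length st"])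
  have ls: "x \<le> 1/3 \<Longrightarrow> lowSmall (st @ [x])" using hi by (auto simp: lowSmall_def nth_append)
  show ?thesis using eq bfinv' hl nl na ls by simp
next
  case True
  then obtain j where j: "j < length st" "bf_step st x = st[j := st!j + x]" "st!j + x \<le> 1"
    "\<forall>i<length st. st!i + x \<le> 1 \<longrightarrow> st!i \<le> st!j" using bf_fit by blast
  have lj: "1/4 < st!j" using bfinv j(1) by (auto simp: bfinv_def)
  have newload: "1/2 < st!j + x" "st!j + x \<le> 1" using lj it j(3) by (auto simp: item_def)
  have len: "length (bf_step st x) = length st" using j by simp
  have nth': "\<And>i. i < length st \<Longrightarrow> bf_step st x ! i = (if i = j then st!j + x else st!i)"
    using j by auto
  have bfinv': "bfinv (bf_step st x)"
    unfolding bfinv_def len using bfinv newload lj unfolding bfinv_def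
    by (auto simp: nth')
  show ?thesis
  proof (cases "aev st x")
    case True
    then obtain i where i: "i < length st" "1/2 < st!i" "st!i + x \<le> 1" by (auto simp: aev_def)
    have "1/2 < st!j" using j(4) i by force
    then have "hasLow (bf_step st x) = hasLow st"
      unfolding hasLow_def len using newload
      by (smt (verit, best) nth')
    then show ?thesis using bfinv' True len by simp
  next
    case False
    have lowj: "st!j \<le> 1/2" using False j(1,3) unfolding aev_def by force
    have hl: "hasLow st" using lowj j(1) by (auto simp: hasLow_def)
    have nhl: "\<not> hasLow (bf_step st x)"
    proof
      assume "hasLow (bf_step st x)"
      then obtain i where i: "i < length st" "bf_step st x ! i \<le> 1/2" by (auto simp: hasLow_def len)
      then have "i \<noteq> j" using newload nth' by auto
      then have "st!i \<le> 1/2" using i nth' by auto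
      then show False using bfinv i(1) j(1) lowj \<open>i \<noteq> j\<close> by (auto simp: bfinv_def)
    qed
    have gd: "lowSmall st \<Longrightarrow> x \<le> 1/3 \<Longrightarrow> good (bf_step st x)"
    proof -
      assume "lowSmall st" "x \<le> 1/3"
      then have "st!j \<le> 1/3" using lowj j(1) by (auto simp: lowSmall_def)
      then show "good (bf_step st x)" unfolding good_def len
        using j(1) newload \<open>x \<le> 1/3\<close> by (auto simp: nth' intro!: exI[of _ j])
    qed
    show ?thesis using bfinv' False len hl nhl gd by simp
  qed
qed

lemma good_aev: "good st \<Longrightarrow> x \<le> 1/3 \<Longrightarrow> aev st x"
  by (auto simp: good_def aev_def)

lemma four_window:
  assumes "bfinv s0" "item x1" "item x2" "item x3" "item x4"
    "x1 \<le> 1/3" "x2 \<le> 1/3" "x3 \<le> 1/3" "x4 \<le> 1/3"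
  shows "aev s0 x1 \<or> aev (bf_step s0 x1) x2 \<or> aev (bf_step (bf_step s0 x1) x2) x3
         \<or> aev (bf_step (bf_step (bf_step s0 x1) x2) x3) x4"
proof (rule ccontr)
  assume na: "\<not> ?thesis"
  define s1 where "s1 = bf_step s0 x1"
  define s2 where "s2 = bf_step s1 x2"
  define s3 where "s3 = bf_step s2 x3"
  have na': "\<not> aev s0 x1" "\<not> aev s1 x2" "\<not> aev s2 x3" "\<not> aev s3 x4"
    using na by (auto simp: s1_def s2_def s3_def)
  have i1: "bfinv s1" using step_main[OF assms(1,2)] s1_def by simp
  have i2: "bfinv s2" using step_main[OF i1 assms(3)] s2_def by simp
  show False
  proof (cases "hasLow s0")
    case True
    then have "\<not> hasLow s1" using step_main[OF assms(1,2)] na' s1_def by simp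
    then have "hasLow s2 \<and> lowSmall s2" using step_main[OF i1 assms(3)] na' s2_def assms by simp
    then have "good s3" using step_main[OF i2 assms(4)] na' s3_def assms by simp
    then show False using good_aev na' assms by blast
  next
    case False
    then have "hasLow s1 \<and> lowSmall s1" using step_main[OF assms(1,2)] na' s1_def assms by simp
    then have "good s2" using step_main[OF i1 assms(3)] na' s2_def assms by simp
    then show False using good_aev na' assms by blast
  qed
qed




definition pre :: "real list \<Rightarrow> nat \<Rightarrow> real list" where
  "pre L k = foldl bf_step [] (take k L)"
definition Ev :: "real list \<Rightarrow> nat set" where
  "Ev L = {k. k < length L \<and> aev (pre L k) (L!k)}"
definition Win :: "nat \<Rightarrow> real list \<Rightarrow> nat set" where
  "Win k L = {i. i + k \<le> length L \<and> (\<forall>t<k. L!(i+t) \<le> 1/3)}"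

lemma pre_Suc: "k < length L \<Longrightarrow> pre L (Suc k) = bf_step (pre L k) (L!k)"
  by (simp add: pre_def take_Suc_conv_app_nth)

lemma pre_inv: "\<forall>x\<in>set L. item x \<Longrightarrow> k \<le> length L \<Longrightarrow> bfinv (pre L k)"
proof (induction k)
  case 0 then show ?case by (simp add: pre_def bfinv_def)
next
  case (Suc k)
  then show ?case using step_main[of "pre L k" "L!k"] by (simp add: pre_Suc)
qed

lemma potential:
  assumes "\<forall>x\<in>set L. item x" "k \<le> length L"
  shows "2 * length (pre L k) + card {e. e < k \<and> aev (pre L e) (L!e)} \<le> k + (if hasLow (pre L k) then 1 else 0)"
  using assms(2)
proof (induction k)
  case 0 then show ?case by (simp add: pre_def)
next
  case (Suc k)
  have eq: "{e. e < Suc k \<and> aev (pre L e) (L!e)} = {e. e < k \<and> aev (pre L e) (L!e)} \<union> (if aev (pre L k) (L!k) then {k} else {})"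
    by (auto simp: less_Suc_eq)
  have c: "card {e. e < Suc k \<and> aev (pre L e) (L!e)} = card {e. e < k \<and> aev (pre L e) (L!e)} + (if aev (pre L k) (L!k) then 1 else 0)"
    unfolding eq by (auto)
  have it: "item (L!k)" using assms(1) Suc.prems by auto
  have "bfinv (pre L k)" using pre_inv assms(1) Suc.prems by simp
  from step_main[OF this it] Suc.IH Suc.prems show ?case unfolding c pre_Suc[OF Suc_le_lessD[OF Suc.prems]]
    by (simp split: if_splits)
qed

lemma BF_bound:
  assumes "\<forall>x\<in>set L. item x"
  shows "2 * BF L + card (Ev L) \<le> length L + 1"
proof -
  have "pre L (length L) = foldl bf_step [] L" by (simp add: pre_def)
  moreover have "Ev L = {e. e < length L \<and> aev (pre L e) (L!e)}" by (simp add: Ev_def)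
  ultimately show ?thesis using potential[OF assms le_refl] by (simp add: BF_def split: if_splits)
qed

lemma Wc_Win: "Wc k (map (\<lambda>x. x \<le> 1/3) L) = card (Win k L)"
proof -
  have "{i. i + k \<le> length (map (\<lambda>x. x \<le> 1/3) L) \<and> (\<forall>t<k. (map (\<lambda>x. x \<le> (1/3::real)) L)!(i+t))} = Win k L"
    by (auto simp: Win_def)
  then show ?thesis by (simp add: Wc_def)
qed

lemma window_ev:
  assumes items: "\<forall>x\<in>set L. item x" and i: "i \<in> Win 4 L"
  shows "\<exists>e\<in>Ev L. i \<le> e \<and> e \<le> i + 3"
proof -
  have len: "i + 4 \<le> length L" and sm: "\<forall>t<4. L!(i+t) \<le> 1/3" using i by (auto simp: Win_def)
  have its: "\<And>t. t < 4 \<Longrightarrow> item (L!(i+t))" using items len by auto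
  have inv0: "bfinv (pre L i)" using pre_inv items len by simp
  have e1: "i + 1 = Suc i" and e2: "i + 2 = Suc (i+1)" and e3: "i + 3 = Suc (i + 2)" by simp_all
  have p1: "pre L (i+1) = bf_step (pre L i) (L!i)" unfolding e1 by (rule pre_Suc) (use len in simp)
  have p2: "pre L (i+2) = bf_step (pre L (i+1)) (L!(i+1))" unfolding e2 by (rule pre_Suc) (use len in simp)
  have p3: "pre L (i+3) = bf_step (pre L (i+2)) (L!(i+2))" unfolding e3 by (rule pre_Suc) (use len in simp)
  have s: "L!(i+0) \<le> 1/3" "L!(i+1) \<le> 1/3" "L!(i+2) \<le> 1/3" "L!(i+3) \<le> 1/3"
    using sm[rule_format, of 0] sm[rule_format, of 1] sm[rule_format, of 2] sm[rule_format, of 3]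
    by (simp_all add: numeral_eq_Suc)
  have "aev (pre L i) (L!(i+0)) \<or> aev (pre L (i+1)) (L!(i+1)) \<or> aev (pre L (i+2)) (L!(i+2))
         \<or> aev (pre L (i+3)) (L!(i+3))"
    unfolding p3 p2 p1
    using four_window[OF inv0 its[of 0] its[of 1] its[of 2] its[of 3] s] by simp
  then show ?thesis using len unfolding Ev_def
    apply (elim disjE)
    subgoal by (rule bexI[of _ i]) auto
    subgoal by (rule bexI[of _ "i+1"]) auto
    subgoal by (rule bexI[of _ "i+2"]) auto
    subgoal by (rule bexI[of _ "i+3"]) auto
    done
qed

lemma finite_Win: "finite (Win k L)"
  by (rule finite_subset[of _ "{..length L}"]) (auto simp: Win_def)
lemma finite_Ev: "finite (Ev L)"
  by (rule finite_subset[of _ "{..<length L}"]) (auto simp: Ev_def)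

lemma count1:
  assumes items: "\<forall>x\<in>set L. item x"
  shows "card (Win 4 L) \<le> 4 * card (Ev L)"
proof -
  have "Win 4 L \<subseteq> (\<Union>e\<in>Ev L. {e-3..e})"
    using window_ev[OF items] by fastforce
  then have "card (Win 4 L) \<le> card (\<Union>e\<in>Ev L. {e-3..e})"
    by (intro card_mono) (auto simp: finite_Ev)
  also have "\<dots> \<le> (\<Sum>e\<in>Ev L. card {e-3..e})" by (rule card_UN_le) (simp add: finite_Ev)
  also have "\<dots> \<le> (\<Sum>e\<in>Ev L. 4)" by (intro sum_mono) simp
  finally show ?thesis by simp
qed

lemma count2:
  assumes items: "\<forall>x\<in>set L. item x"
  shows "card (Win 4 L) \<le> card (Ev L) + card (Win 5 L)"
proof -
  define R where "R = {i\<in>Win 4 L. i = 0 \<or> \<not> L!(i-1) \<le> 1/3}"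
  have sub: "Win 4 L \<subseteq> R \<union> Suc ` Win 5 L"
  proof
    fix i assume i: "i \<in> Win 4 L"
    show "i \<in> R \<union> Suc ` Win 5 L"
    proof (cases "i \<in> R")
      case True then show ?thesis by simp
    next
      case False
      then have i0: "i \<noteq> 0" and sm: "L!(i-1) \<le> 1/3" using i by (auto simp: R_def)
      have iw: "i + 4 \<le> length L" "\<forall>t<4. L!(i+t) \<le> 1/3" using i by (auto simp: Win_def)
      have "\<forall>t<5. L!(i-1+t) \<le> 1/3"
      proof (intro allI impI)
        fix t :: nat assume t: "t < 5"
        show "L!(i-1+t) \<le> 1/3"
        proof (cases t)
          case 0 then show ?thesis using sm by simp
        next
          case (Suc t')
          then have "i - 1 + t = i + t'" using i0 by simp
          moreover have "t' < 4" using t Suc by simp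
          ultimately show ?thesis using iw(2) by simp
        qed
      qed
      moreover have "i - 1 + 5 \<le> length L" using iw(1) i0 by simp
      ultimately have "i - 1 \<in> Win 5 L" unfolding Win_def by blast
      then show ?thesis using i0 by (auto intro: image_eqI[of _ _ "i-1"])
    qed
  qed
  define c where "c i = (SOME e. e \<in> Ev L \<and> i \<le> e \<and> e \<le> i + 3)" for i
  have c: "i \<in> Win 4 L \<Longrightarrow> c i \<in> Ev L \<and> i \<le> c i \<and> c i \<le> i + 3" for i
    unfolding c_def using window_ev[OF items, of i] by (metis (mono_tags, lifting) someI)
  have inj: "inj_on c R"
  proof (rule inj_onI)
    fix i j assume iR: "i \<in> R" and jR: "j \<in> R" and cij: "c i = c j"
    show "i = j"
    proof (rule ccontr)
      assume "i \<noteq> j"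
      then consider "i < j" | "j < i" by linarith
      then show False
      proof cases
        case 1
        have ci: "i \<le> c i \<and> c i \<le> i + 3" "j \<le> c j" using c iR jR by (auto simp: R_def)
        then have jle: "j - 1 - i < 4" using cij 1 by linarith
        have "L!(i + (j - 1 - i)) \<le> 1/3" using iR jle by (auto simp: R_def Win_def)
        moreover have "i + (j - 1 - i) = j - 1" using 1 by linarith
        ultimately show False using jR 1 by (auto simp: R_def)
      next
        case 2
        have ci: "j \<le> c j \<and> c j \<le> j + 3" "i \<le> c i" using c iR jR by (auto simp: R_def)
        then have jle: "i - 1 - j < 4" using cij 2 by linarith
        have "L!(j + (i - 1 - j)) \<le> 1/3" using jR jle by (auto simp: R_def Win_def)
        moreover have "j + (i - 1 - j) = i - 1" using 2 by linarith
        ultimately show False using iR 2 by (auto simp: R_def)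
      qed
    qed
  qed
  have "card R \<le> card (Ev L)"
    by (rule card_inj_on_le[OF inj]) (use c in \<open>auto simp: R_def finite_Ev\<close>)
  moreover have "card (Win 4 L) \<le> card R + card (Suc ` Win 5 L)"
  proof -
    have fR: "finite R" unfolding R_def using finite_Win[of 4 L] by simp
    have fU: "finite (R \<union> Suc ` Win 5 L)" using fR finite_Win by simp
    have "card (Win 4 L) \<le> card (R \<union> Suc ` Win 5 L)" by (rule card_mono[OF fU sub])
    also have "\<dots> \<le> card R + card (Suc ` Win 5 L)" by (rule card_Un_le)
    finally show ?thesis .
  qed
  moreover have "card (Suc ` Win 5 L) \<le> card (Win 5 L)" by (rule card_image_le) (simp add: finite_Win)
  ultimately show ?thesis by linarith
qed

lemma BF_window_bound:
  assumes "\<forall>x\<in>set L. item x"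
  shows "2 * real (BF L) \<le> real (length L) + 1 - (5 * real (Wc 4 (map (\<lambda>x. x \<le> 1/3) L)) - 4 * real (Wc 5 (map (\<lambda>x. x \<le> 1/3) L))) / 8"
proof -
  have a: "2 * BF L + card (Ev L) \<le> length L + 1" by (rule BF_bound[OF assms])
  have b: "card (Win 4 L) \<le> 4 * card (Ev L)" by (rule count1[OF assms])
  have c: "card (Win 4 L) \<le> card (Ev L) + card (Win 5 L)" by (rule count2[OF assms])
  have a': "2 * real (BF L) + real (card (Ev L)) \<le> real (length L) + 1"
  proof -
    have "real (2 * BF L + card (Ev L)) \<le> real (length L + 1)" using a by (simp only: of_nat_le_iff)
    then show ?thesis by simp
  qed
  have b': "real (card (Win 4 L)) \<le> 4 * real (card (Ev L))"
  proof -
    have "real (card (Win 4 L)) \<le> real (4 * card (Ev L))" using b by (simp only: of_nat_le_iff)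
    then show ?thesis by simp
  qed
  have c': "real (card (Win 4 L)) \<le> real (card (Ev L)) + real (card (Win 5 L))"
  proof -
    have "real (card (Win 4 L)) \<le> real (card (Ev L) + card (Win 5 L))" using c by (simp only: of_nat_le_iff)
    then show ?thesis by simp
  qed
  have "16 * real (BF L) \<le> 8 * real (length L) + 8 - 5 * real (card (Win 4 L)) + 4 * real (card (Win 5 L))"
    using a' b' c' by linarith
  then show ?thesis unfolding Wc_Win by (simp add: field_simps)
qed




lemma Opt_props:
  assumes items: "\<forall>x\<in>set I. 1/4 < x \<and> x \<le> 1/2"
  shows "Opt I \<le> length I \<and> length I \<le> 3 * Opt I \<and>
         length I \<le> card {i. i < length I \<and> I!i \<le> 1/3} + 2 * Opt I"
proof -
  define n where "n = length I"
  define P where "P k = (\<exists>f :: nat \<Rightarrow> nat. (\<forall>i < length I. f i < k) \<and>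
              (\<forall>j < k. (\<Sum>i \<in> {i. i < length I \<and> f i = j}. I ! i) \<le> 1))" for k
  have itm: "i < n \<Longrightarrow> 1/4 < I!i \<and> I!i \<le> 1/2" for i using items n_def by auto
  have Pn: "P n"
  proof -
    have "\<forall>j<n. (\<Sum>i\<in>{i. i<length I \<and> i = j}. I!i) \<le> 1"
    proof (intro allI impI)
      fix j assume j: "j < n"
      then have "{i. i<length I \<and> i=j} = {j}" using n_def by auto
      then show "(\<Sum>i\<in>{i. i<length I \<and> i = j}. I!i) \<le> 1" using itm[OF j] by simp
    qed
    then show ?thesis unfolding P_def n_def by (intro exI[of _ "\<lambda>i. i"]) auto
  qed
  have OptP: "Opt I = (LEAST k. P k)" unfolding Opt_def P_def by simp
  have le: "Opt I \<le> n" unfolding OptP using Pn by (rule Least_le)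
  have "P (Opt I)" unfolding OptP using Pn by (rule LeastI)
  then obtain f where f1: "\<forall>i<n. f i < Opt I"
      and f2: "\<forall>j<Opt I. (\<Sum>i \<in> {i. i < n \<and> f i = j}. I ! i) \<le> 1"
    unfolding P_def n_def by blast
  define m where "m = Opt I"
  define B where "B j = {i. i < n \<and> f i = j}" for j
  define C where "C j = {i\<in>B j. 1/3 < I!i}" for j
  have finB: "finite (B j)" for j by (auto simp: B_def)
  have finC: "finite (C j)" for j by (auto simp: C_def finB)
  have cardB: "card (B j) \<le> 3" if j: "j < m" for j
  proof (rule ccontr)
    assume "\<not> card (B j) \<le> 3"
    then have ne: "B j \<noteq> {}" and c4: "4 \<le> card (B j)" by auto
    have "(\<Sum>i\<in>B j. (1/4::real)) < (\<Sum>i\<in>B j. I!i)"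
      by (rule sum_strict_mono[OF finB ne]) (use itm in \<open>auto simp: B_def\<close>)
    moreover have "(\<Sum>i\<in>B j. I!i) \<le> 1" using f2 j by (simp add: B_def m_def)
    moreover have "real (card (B j)) \<ge> 4" using c4 by simp
    ultimately show False by simp
  qed
  have cardC: "card (C j) \<le> 2" if j: "j < m" for j
  proof (rule ccontr)
    assume "\<not> card (C j) \<le> 2"
    then have ne: "C j \<noteq> {}" and c3: "3 \<le> card (C j)" by auto
    have "(\<Sum>i\<in>C j. (1/3::real)) < (\<Sum>i\<in>C j. I!i)"
      by (rule sum_strict_mono[OF finC ne]) (auto simp: C_def)
    moreover have "(\<Sum>i\<in>C j. I!i) \<le> (\<Sum>i\<in>B j. I!i)"
      by (rule sum_mono2[OF finB]) (auto simp: B_def C_def dest: itm)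
    moreover have "(\<Sum>i\<in>B j. I!i) \<le> 1" using f2 j by (simp add: B_def m_def)
    moreover have "real (card (C j)) \<ge> 3" using c3 by simp
    ultimately show False by simp
  qed
  have "{..<n} \<subseteq> (\<Union>j<m. B j)" using f1 by (auto simp: B_def m_def)
  then have "card {..<n} \<le> card (\<Union>j<m. B j)" by (intro card_mono) (auto simp: finB)
  also have "\<dots> \<le> (\<Sum>j<m. card (B j))" by (rule card_UN_le) simp
  also have "\<dots> \<le> (\<Sum>j<m. 3)" by (intro sum_mono cardB) simp
  finally have n3: "n \<le> 3 * m" by simp
  have "{i. i < n \<and> \<not> I!i \<le> 1/3} \<subseteq> (\<Union>j<m. C j)" using f1 by (auto simp: B_def C_def m_def)
  then have "card {i. i < n \<and> \<not> I!i \<le> 1/3} \<le> card (\<Union>j<m. C j)" by (intro card_mono) (auto simp: finC)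
  also have "\<dots> \<le> (\<Sum>j<m. card (C j))" by (rule card_UN_le) simp
  also have "\<dots> \<le> (\<Sum>j<m. 2)" by (intro sum_mono cardC) simp
  finally have l2: "card {i. i < n \<and> \<not> I!i \<le> 1/3} \<le> 2 * m" by simp
  have eq: "{..<n} = {i. i < n \<and> I!i \<le> 1/3} \<union> {i. i < n \<and> \<not> I!i \<le> 1/3}" by auto
  have "card {..<n} = card {i. i < n \<and> I!i \<le> 1/3} + card {i. i < n \<and> \<not> I!i \<le> 1/3}"
    unfolding eq by (rule card_Un_disjoint) auto
  then have "n = card {i. i < n \<and> I!i \<le> 1/3} + card {i. i < n \<and> \<not> I!i \<le> 1/3}" by simp
  then show ?thesis using le n3 l2 by (simp add: n_def m_def)
qed




lemma poly_bound:
  fixes y :: real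
  assumes "40/121 \<le> y" "y \<le> 1"
  shows "8/243 \<le> y^4 * (5 - 4*y)"
proof (cases "y \<le> 1/2")
  case True
  have "(40/121::real)^4 \<le> y^4" using assms by (intro power_mono) auto
  moreover have "3 \<le> 5 - 4*y" using True by simp
  ultimately have "(40/121::real)^4 * 3 \<le> y^4 * (5 - 4*y)"
    by (intro mult_mono) auto
  moreover have "8/243 \<le> (40/121::real)^4 * 3" by (simp add: power4_eq_xxxx)
  ultimately show ?thesis by linarith
next
  case False
  have "(1/2::real)^4 \<le> y^4" using False by (intro power_mono) auto
  moreover have "1 \<le> 5 - 4*y" using assms by simp
  ultimately have "(1/2::real)^4 * 1 \<le> y^4 * (5 - 4*y)"
    by (intro mult_mono) auto
  moreover have "8/243 \<le> (1/2::real)^4" by (simp add: power4_eq_xxxx)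
  ultimately show ?thesis by linarith
qed

lemma lin_aux:
  fixes E N D P M :: real
  assumes "2*E \<le> N + 1 - D/8" "8/243*(N-3) \<le> D" "N - P/3 \<le> 2*M" "P \<le> N/81" "5 \<le> N"
  shows "E \<le> M + 2"
  using assms by argo

lemma key_real:
  fixes N S m \<mu> E :: real
  assumes mu: "0 < \<mu>" "\<mu> < 1/81" and N5: "5 \<le> N" and S: "0 \<le> S" "S \<le> N"
    and ffnn: "0 \<le> S*(S-1)*(S-2)*(S-3)"
    and m1: "N \<le> 3*m" and m2: "N \<le> S + 2*m"
    and E: "2*E \<le> N + 1 - (S*(S-1)*(S-2)*(S-3)*(5*N - 4*S + 1)/(N*(N-1)*(N-2)*(N-3)))/8"
  shows "E \<le> (3/2 - \<mu>/2)*m + 2"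
proof -
  define c where "c = 3/2 - \<mu>/2"
  define den where "den = N*(N-1)*(N-2)*(N-3)"
  define F where "F = S*(S-1)*(S-2)*(S-3)"
  define Q where "Q = 5*N - 4*S + 1"
  have den: "0 < den" unfolding den_def using N5 by (intro mult_pos_pos) auto
  have Q: "0 < Q" unfolding Q_def using S by simp
  have D0: "0 \<le> F*Q/den" using ffnn Q den unfolding F_def by simp
  have E': "2*E \<le> N + 1 - (F*Q/den)/8" using E unfolding F_def Q_def den_def .
  have c: "121/81 < c" unfolding c_def using mu by simp
  have "E \<le> c*m + 2"
  proof (cases "N - 3 \<le> 2*c*m")
    case True
    have "0 \<le> F*Q/den/8" using D0 by simp
    then show ?thesis using E' True by linarith
  next
    case False
    have NS: "0 \<le> N - S" using S by simp
    have "c*(N - S) \<le> c*(2*m)" using m2 c by (intro mult_left_mono) auto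
    then have "c*(N-S) < N - 3" using False by simp
    moreover have "121/81*(N-S) \<le> c*(N-S)" using c NS by (intro mult_right_mono) auto
    ultimately have lt: "121/81*(N-S) < N - 3" by simp
    define y where "y = (S-3)/(N-3)"
    have N3: "0 < N - 3" using N5 by simp
    have ylo: "40/121 \<le> y" unfolding y_def using lt N3 by (simp add: field_simps)
    have yhi: "y \<le> 1" unfolding y_def using S N3 by (simp add: field_simps)
    have y0: "0 \<le> y" using ylo by simp
    have fac: "y*(N - j) \<le> S - j" if "j \<le> 3" "0 \<le> j" for j
    proof -
      have "S - j - y*(N-j) = (S-3) - y*(N-3) + (3-j)*(1-y)" by (simp add: algebra_simps)
      also have "(S-3) - y*(N-3) = 0" unfolding y_def using N3 by simp
      finally show ?thesis using that yhi by (smt (verit) mult_nonneg_nonneg)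
    qed
    have f0: "y*N \<le> S" using fac[of 0] by simp
    have f1: "y*(N-1) \<le> S-1" using fac[of 1] by simp
    have f2: "y*(N-2) \<le> S-2" using fac[of 2] by simp
    have f3: "y*(N-3) \<le> S-3" using fac[of 3] by simp
    have S3: "3 \<le> S" using f3 y0 N3 by (smt (verit) mult_nonneg_nonneg)
    have "(y*N)*(y*(N-1))*(y*(N-2))*(y*(N-3)) \<le> S*(S-1)*(S-2)*(S-3)"
      using f0 f1 f2 f3 y0 N5 S3
      by (intro mult_mono) (auto intro!: mult_nonneg_nonneg)
    then have Fge: "y^4 * den \<le> F" unfolding F_def den_def by (simp add: algebra_simps power4_eq_xxxx)
    have "y^4 * Q \<le> F*Q/den"
    proof -
      have "y^4 * Q * den \<le> F * Q" using Fge Q by (simp add: mult.commute mult.left_commute mult_right_mono)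
      then show ?thesis using den by (simp add: field_simps)
    qed
    moreover have "(N-3)*(5-4*y) \<le> Q" unfolding Q_def y_def using N3 by (simp add: field_simps)
    then have "y^4*((N-3)*(5-4*y)) \<le> y^4 * Q" using y0 by (intro mult_left_mono) auto
    moreover have "8/243*(N-3) \<le> y^4*((N-3)*(5-4*y))"
    proof -
      have A: "8/243*(N-3) \<le> (y^4*(5-4*y))*(N-3)"
        using mult_right_mono[OF poly_bound[OF ylo yhi], of "N-3"] N3 by simp
      have B: "(y^4*(5-4*y))*(N-3) = y^4*((N-3)*(5-4*y))" by (simp add: field_simps)
      show ?thesis using A unfolding B .
    qed
    ultimately have Dlo: "8/243*(N-3) \<le> F*Q/den" by linarith
    have "(3 - \<mu>)*(N/3) \<le> (3 - \<mu>)*m" using m1 mu by (intro mult_left_mono) auto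
    moreover have "2*c*m = (3 - \<mu>)*m" unfolding c_def by (simp add: algebra_simps)
    moreover have "(3 - \<mu>)*(N/3) = N - \<mu>*N/3" by (simp add: field_simps)
    ultimately have h1: "N - \<mu>*N/3 \<le> 2*c*m" by linarith
    have h2: "\<mu>*N \<le> N/81" using mu N5 by (simp add: mult_right_mono)
    have h1': "N - \<mu>*N/3 \<le> 2*(c*m)" using h1 by (simp add: mult.assoc)
    show ?thesis by (rule lin_aux[OF E' Dlo h1' h2 N5])
  qed
  then show ?thesis by (simp add: c_def)
qed




lemma sum_permutes_lists:
  "(\<Sum>\<sigma>\<in>{\<sigma>. \<sigma> permutes {..<n}}. F (map \<sigma> [0..<n])) = (\<Sum>xs\<in>permutations_of_set {..<n}. F xs)"
proof -
  let ?P = "{\<sigma>. \<sigma> permutes {..<n}}"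
  let ?h = "\<lambda>\<sigma>. map \<sigma> [0..<n]"
  have inj: "inj_on ?h ?P"
  proof (rule inj_onI)
    fix \<sigma> \<tau> assume s: "\<sigma> \<in> ?P" and t: "\<tau> \<in> ?P" and eq: "?h \<sigma> = ?h \<tau>"
    show "\<sigma> = \<tau>"
    proof
      fix x show "\<sigma> x = \<tau> x"
      proof (cases "x < n")
        case True
        then show ?thesis using eq by (metis map_eq_conv atLeastLessThan_iff set_upt zero_le)
      next
        case False
        then show ?thesis using s t by (simp add: permutes_def)
      qed
    qed
  qed
  have img: "?h ` ?P \<subseteq> permutations_of_set {..<n}"
  proof
    fix xs assume "xs \<in> ?h ` ?P"
    then obtain \<sigma> where s: "\<sigma> permutes {..<n}" and xs: "xs = map \<sigma> [0..<n]" by auto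
    have "[0..<n] \<in> permutations_of_set {..<n}" by (auto simp: permutations_of_set_def)
    then have "map \<sigma> [0..<n] \<in> map \<sigma> ` permutations_of_set {..<n}" by blast
    then show "xs \<in> permutations_of_set {..<n}" using permutations_of_set_image_permutes[OF s] xs by simp
  qed
  have cards: "card (?h ` ?P) = card (permutations_of_set {..<n})"
    using card_image[OF inj] card_permutations[of "{..<n}" n] by simp
  have "?h ` ?P = permutations_of_set {..<n}"
    by (rule card_subset_eq[OF _ img cards]) simp
  then have bij: "bij_betw ?h ?P (permutations_of_set {..<n})" using inj by (simp add: bij_betw_def)
  show ?thesis by (rule sum.reindex_bij_betw[OF bij])
qed

lemma fact_expand:
  assumes "5 \<le> n"
  shows "(fact n :: real) = real n * (real n - 1) * (real n - 2) * (real n - 3) * (real n - 4) * fact (n - 5)"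
    and "(fact (n - 4) :: real) = (real n - 4) * fact (n - 5)"
proof -
  obtain k where k: "n = k + 5" using assms by (metis add.commute le_Suc_ex)
  show "(fact n :: real) = real n * (real n - 1) * (real n - 2) * (real n - 3) * (real n - 4) * fact (n - 5)"
    unfolding k by (simp add: numeral_eq_Suc algebra_simps)
  show "(fact (n - 4) :: real) = (real n - 4) * fact (n - 5)"
    unfolding k by (simp add: numeral_eq_Suc algebra_simps)
qed

lemma ff4_eval: "ff 4 s = real s * (real s - 1) * (real s - 2) * (real s - 3)"
  by (simp add: ff_def numeral_eq_Suc lessThan_Suc algebra_simps)

lemma ff5_eval: "ff 5 s = ff 4 s * (real s - 4)"
  using ff_Suc1[of 4 s] by (simp add: numeral_eq_Suc)

lemma ff4_nonneg: "0 \<le> real s * (real s - 1) * (real s - 2) * (real s - 3)"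
proof (cases "s \<le> 3")
  case True
  then have "s = 0 \<or> s = 1 \<or> s = 2 \<or> s = 3" by auto
  then show ?thesis by auto
next
  case False
  then have "(3::real) < real s" by simp
  then show ?thesis by (intro mult_nonneg_nonneg) auto
qed

lemma E_bound:
  fixes I :: "real list" and \<mu> :: real
  assumes items: "\<forall>x\<in>set I. 1/4 < x \<and> x \<le> 1/2" and m5: "5 \<le> Opt I"
    and mu: "0 < \<mu>" "\<mu> < 1/81"
  shows "E_BF_random I \<le> (3/2 - \<mu>/2) * real (Opt I) + 2"
proof -
  define n where "n = length I"
  define m where "m = Opt I"
  define g where "g i = (I!i \<le> 1/3)" for i
  define s where "s = card {i\<in>{..<n}. g i}"
  have OP: "Opt I \<le> n \<and> n \<le> 3 * Opt I \<and> n \<le> card {i. i < n \<and> I!i \<le> 1/3} + 2 * Opt I"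
    using Opt_props[OF items] n_def by simp
  have sdef: "card {i. i < n \<and> I!i \<le> 1/3} = s" unfolding s_def g_def by (simp add: lessThan_def)
  have n5: "5 \<le> n" using OP m5 by simp
  have sn: "s \<le> n" unfolding s_def by (metis (no_types, lifting) card_lessThan card_mono finite_lessThan mem_Collect_eq subsetI)
  let ?P = "permutations_of_set {..<n}"
  have cardP: "card {\<sigma>. \<sigma> permutes {..<n}} = fact n" by (rule card_permutations) simp_all
  have EB: "E_BF_random I = (\<Sum>xs\<in>?P. real (BF (map ((!) I) xs))) / fact n"
  proof -
    have "(\<Sum>\<sigma>\<in>{\<sigma>. \<sigma> permutes {..<length I}}. real (BF (permute_list_by \<sigma> I)))
        = (\<Sum>\<sigma>\<in>{\<sigma>. \<sigma> permutes {..<n}}. (\<lambda>xs. real (BF (map ((!) I) xs))) (map \<sigma> [0..<n]))"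
      by (simp add: permute_list_by_def n_def o_def)
    also have "\<dots> = (\<Sum>xs\<in>?P. real (BF (map ((!) I) xs)))" by (rule sum_permutes_lists)
    finally show ?thesis unfolding E_BF_random_def using cardP by (simp add: n_def)
  qed
  define W4 where "W4 xs = real (Wc 4 (map g xs))" for xs
  define W5 where "W5 xs = real (Wc 5 (map g xs))" for xs
  have each: "2 * real (BF (map ((!) I) xs)) \<le> real n + 1 - (5 * W4 xs - 4 * W5 xs) / 8" if xs: "xs \<in> ?P" for xs
  proof -
    have sx: "set xs = {..<n}" and lx: "length xs = n" using xs
      by (auto simp: permutations_of_set_def distinct_card[symmetric])
    have it: "\<forall>x\<in>set (map ((!) I) xs). item x" using items sx n_def by (auto simp: item_def)
    have mp: "map (\<lambda>x. x \<le> 1/3) (map ((!) I) xs) = map g xs" by (simp add: g_def)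
    show ?thesis using BF_window_bound[OF it] lx unfolding mp W4_def W5_def by simp
  qed
  have "2 * (\<Sum>xs\<in>?P. real (BF (map ((!) I) xs))) \<le> (\<Sum>xs\<in>?P. real n + 1 - (5 * W4 xs - 4 * W5 xs) / 8)"
    unfolding sum_distrib_left by (rule sum_mono) (rule each)
  also have "\<dots> = fact n * (real n + 1) - (5 * (\<Sum>xs\<in>?P. W4 xs) - 4 * (\<Sum>xs\<in>?P. W5 xs)) / 8"
  proof -
    have a: "(\<Sum>xs\<in>?P. real n + 1 - (5 * W4 xs - 4 * W5 xs) / 8)
        = (\<Sum>xs\<in>?P. real n + 1) - (\<Sum>xs\<in>?P. (5 * W4 xs - 4 * W5 xs)) / 8"
      by (subst sum_subtractf) (simp add: sum_divide_distrib)
    have b: "(\<Sum>xs\<in>?P. (5 * W4 xs - 4 * W5 xs)) = 5 * (\<Sum>xs\<in>?P. W4 xs) - 4 * (\<Sum>xs\<in>?P. W5 xs)"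
      by (simp add: sum_subtractf sum_distrib_left)
    have c: "(\<Sum>xs\<in>?P. real n + 1) = fact n * (real n + 1)" by simp
    show ?thesis unfolding a b c ..
  qed
  finally have S1: "2 * (\<Sum>xs\<in>?P. real (BF (map ((!) I) xs))) \<le> fact n * (real n + 1) - (5 * (\<Sum>xs\<in>?P. W4 xs) - 4 * (\<Sum>xs\<in>?P. W5 xs)) / 8" .
  have SW4: "(\<Sum>xs\<in>?P. W4 xs) = real (n + 1 - 4) * ff 4 s * fact (n - 4)"
    unfolding W4_def s_def by (rule sum_Wc) simp_all
  have SW5: "(\<Sum>xs\<in>?P. W5 xs) = real (n + 1 - 5) * ff 5 s * fact (n - 5)"
    unfolding W5_def s_def by (rule sum_Wc) simp_all
  define N where "N = real n"
  define S where "S = real s"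
  define f5 where "f5 = (fact (n - 5) :: real)"
  have f5p: "0 < f5" unfolding f5_def by simp
  have fe1: "(fact n :: real) = N*(N-1)*(N-2)*(N-3)*(N-4)*f5" using fact_expand(1)[OF n5] N_def f5_def by simp
  have fe2: "(fact (n-4) :: real) = (N-4)*f5" using fact_expand(2)[OF n5] N_def f5_def by simp
  have r4: "real (n + 1 - 4) = N - 3" using n5 N_def by (simp add: of_nat_diff)
  have r5: "real (n + 1 - 5) = N - 4" using n5 N_def by (simp add: of_nat_diff)
  have N5: "5 \<le> N" using n5 N_def by simp
  have E2: "2 * E_BF_random I \<le> (real n + 1) - (5 * (\<Sum>xs\<in>?P. W4 xs) - 4 * (\<Sum>xs\<in>?P. W5 xs)) / 8 / fact n"
    unfolding EB using S1 by (simp add: field_simps)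
  have Dq: "(5 * (\<Sum>xs\<in>?P. W4 xs) - 4 * (\<Sum>xs\<in>?P. W5 xs)) / fact n
      = S*(S-1)*(S-2)*(S-3)*(5*N - 4*S + 1)/(N*(N-1)*(N-2)*(N-3))"
  proof -
    define F where "F = S*(S-1)*(S-2)*(S-3)"
    define X where "X = (N-4)*f5"
    have X: "X \<noteq> 0" unfolding X_def using N5 f5p by simp
    have L: "5 * (\<Sum>xs\<in>?P. W4 xs) - 4 * (\<Sum>xs\<in>?P. W5 xs) = (F*(5*N-4*S+1)) * X"
      unfolding SW4 SW5 r4 r5 fe2 ff5_eval ff4_eval X_def F_def S_def f5_def by (simp add: algebra_simps)
    have dn: "(fact n :: real) = (N*(N-1)*(N-2)*(N-3)) * X" unfolding fe1 X_def by (simp add: algebra_simps)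
    show ?thesis unfolding L dn F_def using X by simp
  qed
  have E3: "2 * E_BF_random I \<le> N + 1 - (S*(S-1)*(S-2)*(S-3)*(5*N - 4*S + 1)/(N*(N-1)*(N-2)*(N-3)))/8"
  proof -
    have e: "(5 * (\<Sum>xs\<in>?P. W4 xs) - 4 * (\<Sum>xs\<in>?P. W5 xs)) / 8 / fact n
        = ((5 * (\<Sum>xs\<in>?P. W4 xs) - 4 * (\<Sum>xs\<in>?P. W5 xs)) / fact n) / 8" by simp
    show ?thesis using E2 unfolding e Dq N_def .
  qed
  have m1: "N \<le> 3 * real m" using OP N_def m_def by simp
  have m2: "N \<le> S + 2 * real m"
  proof -
    have "n \<le> s + 2 * m" using OP sdef m_def by simp
    then show ?thesis unfolding N_def S_def by linarith
  qed
  show ?thesis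
    using key_real[OF mu N5 _ _ _ m1 m2 E3] sn ff4_nonneg[of s] unfolding S_def N_def m_def by simp
qed




theorem theorem1p4:
  fixes \<mu> :: real
  assumes "0 < \<mu>" and "\<mu> < 1" and "81 * \<mu> = (1 - \<mu>) ^ 3"
  shows "limsup (\<lambda>m::nat. SUP I \<in> {I :: real list. Opt I = m \<and>
                       (\<forall>x \<in> set I. 1/4 < x \<and> x \<le> 1/2)}.
                    ereal (E_BF_random I / real (Opt I)))
         \<le> ereal (3/2 - \<mu> / 2)"
proof -
  have "(1 - \<mu>)^3 < 1^3" using assms(1,2) by (intro power_strict_mono) auto
  then have mu81: "\<mu> < 1/81" using assms(3) by simp
  define c where "c = 3/2 - \<mu>/2"
  have ev: "eventually (\<lambda>m::nat. (SUP I \<in> {I :: real list. Opt I = m \<and>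
                       (\<forall>x \<in> set I. 1/4 < x \<and> x \<le> 1/2)}.
                    ereal (E_BF_random I / real (Opt I))) \<le> ereal (c + 2 / real m)) sequentially"
    unfolding eventually_sequentially
  proof (intro exI[of _ 5] allI impI)
    fix m :: nat assume m5: "5 \<le> m"
    show "(SUP I \<in> {I :: real list. Opt I = m \<and> (\<forall>x \<in> set I. 1/4 < x \<and> x \<le> 1/2)}.
                    ereal (E_BF_random I / real (Opt I))) \<le> ereal (c + 2 / real m)"
    proof (rule SUP_least)
      fix I :: "real list" assume "I \<in> {I :: real list. Opt I = m \<and> (\<forall>x \<in> set I. 1/4 < x \<and> x \<le> 1/2)}"
      then have om: "Opt I = m" and it: "\<forall>x \<in> set I. 1/4 < x \<and> x \<le> 1/2" by auto
      have "E_BF_random I \<le> c * real m + 2"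
        using E_bound[OF it _ assms(1) mu81] om m5 unfolding c_def by simp
      moreover have mp: "0 < real m" using m5 by simp
      ultimately have "E_BF_random I / real m \<le> c + 2 / real m"
        by (simp add: field_simps)
      then show "ereal (E_BF_random I / real (Opt I)) \<le> ereal (c + 2 / real m)" using om by simp
    qed
  qed
  have lim: "(\<lambda>m::nat. ereal (c + 2 / real m)) \<longlonglongrightarrow> ereal c"
  proof -
    have "(\<lambda>m::nat. c + 2 / real m) \<longlonglongrightarrow> c + 0"
      by (intro tendsto_add tendsto_const lim_const_over_n)
    then show ?thesis by (intro tendsto_ereal) simp
  qed
  have "limsup (\<lambda>m::nat. SUP I \<in> {I :: real list. Opt I = m \<and>
                       (\<forall>x \<in> set I. 1/4 < x \<and> x \<le> 1/2)}.
                    ereal (E_BF_random I / real (Opt I)))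
        \<le> limsup (\<lambda>m::nat. ereal (c + 2 / real m))"
    by (rule Limsup_mono[OF ev])
  also have "\<dots> = ereal c" by (rule lim_imp_Limsup[OF _ lim]) simp
  finally show ?thesis unfolding c_def .
qed


end
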